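(* Let $H$ be an ASC-hypergraph and $M\subseteq H$. Then every $M$-antichain misses $H$ if and only if there is a construction $K$ of $H$ with $M\subseteq K$.
   Context: A hypergraph is a finite set $H$ of nonempty subsets of some finite set; its carrier is $\bigcup H$. For a family $F$ and set $Y$, $F_Y=\{X\in F\mid X\subseteq Y\}$. A hypergraph partition of $H$ is a partition $\{H_1,\dots,H_n\}$ ($n\ge0$) of the set $H$ with $\{\bigcup H_1,\dots,\bigcup H_n\}$ a partition of $\bigcup H$; $H$ is connected if it has exactly one hypergraph partition; the finest hypergraph partition is the unique one whose blocks are connected. $H$ is atomic if $\{x\}\in H$ for all $x\in\bigcup H$; saturated if $X_1,X_2\in H$ with $X_1\cap X_2\neq\emptyset$ imply $X_1\cup X_2\in H$. An ASC-hypergraph is one that is atomic, saturated and connected. Constructions of an atomic $H$, by induction on $|\bigcup H|$: (0) $\emptyset$ is the only construction of $\emptyset$; (1) if $|\bigcup H|\ge1$, $H$ connected, $x\in\bigcup H$, $K$ a construction of $H_{\bigcup H\setminus\{x\}}$, then $K\cup\{\bigcup H\}$ is a construction of $H$; (2) if $H$ is not connected with finest hypergraph partition $\{H_1,\dots,H_n\}$, $n\ge2$, and $K_i$ is a construction of $H_i$, then $K_1\cup\dots\cup K_n$ is a construction of $H$. For $M\subseteq H$, an $M$-antichain is a subset $S\subseteq M$ with $|S|\ge2$ such that no member of $S$ is a subset of another member of $S$; it misses $H$ when $\bigcup S\notin H$. *)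

theory Defs
  imports "HOL-Library.Disjoint_Sets"
begin

definition hypergraph :: "'a set set \<Rightarrow> bool" where
  "hypergraph H \<longleftrightarrow> finite H \<and> (\<forall>X\<in>H. X \<noteq> {} \<and> finite X)"

definition restr :: "'a set set \<Rightarrow> 'a set \<Rightarrow> 'a set set" where
  "restr F Y = {X \<in> F. X \<subseteq> Y}"

text \<open>A hypergraph partition: a partition P of the set H such that the family of
  carriers of the blocks (indexed by the blocks) is a partition of the carrier of H.\<close>
definition hyp_partition :: "'a set set \<Rightarrow> 'a set set set \<Rightarrow> bool" where
  "hyp_partition H P \<longleftrightarrow> partition_on H P \<and> partition_on (\<Union>H) (Union ` P) \<and> inj_on Union P"

definition connected_hg :: "'a set set \<Rightarrow> bool" where
  "connected_hg H \<longleftrightarrow> (\<exists>!P. hyp_partition H P)"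

definition finest_hyp_partition :: "'a set set \<Rightarrow> 'a set set set \<Rightarrow> bool" where
  "finest_hyp_partition H P \<longleftrightarrow> hyp_partition H P \<and> (\<forall>B\<in>P. connected_hg B)"

definition atomic :: "'a set set \<Rightarrow> bool" where
  "atomic H \<longleftrightarrow> (\<forall>x\<in>\<Union>H. {x} \<in> H)"

definition saturated :: "'a set set \<Rightarrow> bool" where
  "saturated H \<longleftrightarrow> (\<forall>X1\<in>H. \<forall>X2\<in>H. X1 \<inter> X2 \<noteq> {} \<longrightarrow> X1 \<union> X2 \<in> H)"

definition ASC :: "'a set set \<Rightarrow> bool" where
  "ASC H \<longleftrightarrow> hypergraph H \<and> atomic H \<and> saturated H \<and> connected_hg H"

inductive construction :: "'a set set \<Rightarrow> 'a set set \<Rightarrow> bool" where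
  empty: "construction {} {}"
| conn: "\<lbrakk>atomic H; card (\<Union>H) \<ge> 1; connected_hg H; x \<in> \<Union>H;
          construction (restr H (\<Union>H - {x})) K\<rbrakk>
         \<Longrightarrow> construction H (K \<union> {\<Union>H})"
| disc: "\<lbrakk>atomic H; \<not> connected_hg H; finest_hyp_partition H P; card P \<ge> 2;
          \<forall>B\<in>P. construction B (f B)\<rbrakk>
         \<Longrightarrow> construction H (\<Union>B\<in>P. f B)"

definition antichain :: "'a set set \<Rightarrow> 'a set set \<Rightarrow> bool" where
  "antichain M S \<longleftrightarrow> S \<subseteq> M \<and> card S \<ge> 2 \<and> (\<forall>X\<in>S. \<forall>Y\<in>S. X \<subseteq> Y \<longrightarrow> X = Y)"

definition misses :: "'a set set \<Rightarrow> 'a set set \<Rightarrow> bool" where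
  "misses S H \<longleftrightarrow> \<Union>S \<notin> H"

end

theory Submission
  imports Defs
begin

lemma hp_iff:
  "hyp_partition H P \<longleftrightarrow> \<Union>P = H \<and> (\<forall>X\<in>P. \<Union>X \<noteq> {}) \<and>
     (\<forall>X\<in>P. \<forall>Y\<in>P. X \<noteq> Y \<longrightarrow> X \<inter> Y = {} \<and> \<Union>X \<inter> \<Union>Y = {})"
proof
  assume h: "hyp_partition H P"
  have 1: "\<Union>P = H" "disjoint P" "{} \<notin> Union ` P" "disjoint (Union ` P)" "inj_on Union P"
    using h by (auto simp: hyp_partition_def partition_on_def)
  show "\<Union>P = H \<and> (\<forall>X\<in>P. \<Union>X \<noteq> {}) \<and>
     (\<forall>X\<in>P. \<forall>Y\<in>P. X \<noteq> Y \<longrightarrow> X \<inter> Y = {} \<and> \<Union>X \<inter> \<Union>Y = {})"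
  proof (intro conjI ballI impI)
    show "\<Union>P = H" by (fact 1(1))
  next
    fix X assume "X \<in> P" then show "\<Union>X \<noteq> {}" using 1(3) by force
  next
    fix X Y assume a: "X\<in>P" "Y\<in>P" "X\<noteq>Y"
    show "X \<inter> Y = {}" using disjointD[OF 1(2) a] .
    have "\<Union>X \<noteq> \<Union>Y" using 1(5) a by (meson inj_onD)
    then show "\<Union>X \<inter> \<Union>Y = {}" using disjointD[OF 1(4)] a by blast
  qed
next
  assume h: "\<Union>P = H \<and> (\<forall>X\<in>P. \<Union>X \<noteq> {}) \<and>
     (\<forall>X\<in>P. \<forall>Y\<in>P. X \<noteq> Y \<longrightarrow> X \<inter> Y = {} \<and> \<Union>X \<inter> \<Union>Y = {})"
  show "hyp_partition H P" unfolding hyp_partition_def partition_on_def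
  proof (intro conjI)
    show "\<Union>P = H" using h by blast
    show "disjoint P" by (rule disjointI) (use h in simp)
    show "{} \<notin> P" using h by force
    show "\<Union>(Union ` P) = \<Union>H" using h by blast
    show "disjoint (Union ` P)"
    proof (rule disjointI)
      fix a b assume ab: "a \<in> Union ` P" "b \<in> Union ` P" "a \<noteq> b"
      then obtain X Y where XY: "X\<in>P" "Y\<in>P" "a = \<Union>X" "b = \<Union>Y" by blast
      then have "X \<noteq> Y" using ab by blast
      then show "a \<inter> b = {}" using h XY by simp
    qed
    show "{} \<notin> Union ` P" using h by force
    show "inj_on Union P"
    proof (rule inj_onI)
      fix X Y assume XY: "X\<in>P" "Y\<in>P" "\<Union>X = \<Union>Y"
      show "X = Y"
      proof (rule ccontr)
        assume "X \<noteq> Y"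
        have h1: "\<forall>X\<in>P. \<forall>Y\<in>P. X \<noteq> Y \<longrightarrow> X \<inter> Y = {} \<and> \<Union>X \<inter> \<Union>Y = {}"
          using h by (elim conjE)
        have h2: "\<forall>X\<in>P. \<Union>X \<noteq> {}" using h by (elim conjE)
        have "\<Union>X \<inter> \<Union>Y = {}" using h1 XY \<open>X \<noteq> Y\<close> by blast
        moreover have "\<Union>X \<noteq> {}" using h2 XY by blast
        ultimately
        show False using XY by simp
      qed
    qed
  qed
qed

lemma hp_cover: "hyp_partition H P \<Longrightarrow> \<Union>P = H" by (simp add: hp_iff)
lemma hp_ne: "hyp_partition H P \<Longrightarrow> X \<in> P \<Longrightarrow> \<Union>X \<noteq> {}" by (simp add: hp_iff)
lemma hp_disj: "hyp_partition H P \<Longrightarrow> X \<in> P \<Longrightarrow> Y \<in> P \<Longrightarrow> X \<noteq> Y \<Longrightarrow> X \<inter> Y = {}"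
  by (simp add: hp_iff)
lemma hp_cdisj: "hyp_partition H P \<Longrightarrow> X \<in> P \<Longrightarrow> Y \<in> P \<Longrightarrow> X \<noteq> Y \<Longrightarrow> \<Union>X \<inter> \<Union>Y = {}"
  by (simp add: hp_iff)
lemma hp_uniq: "hyp_partition H P \<Longrightarrow> B \<in> P \<Longrightarrow> C \<in> P \<Longrightarrow> Z \<noteq> {} \<Longrightarrow> Z \<subseteq> \<Union>B \<Longrightarrow> Z \<subseteq> \<Union>C \<Longrightarrow> B = C"
  using hp_cdisj by blast

lemma constr_props:
  assumes "construction H K"
  shows "(\<forall>X\<in>K. X \<noteq> {} \<and> X \<subseteq> \<Union>H) \<and>
    (\<forall>S. S \<subseteq> K \<longrightarrow> 2 \<le> card S \<longrightarrow> (\<forall>X\<in>S. \<forall>Y\<in>S. X \<subseteq> Y \<longrightarrow> X = Y) \<longrightarrow> \<Union>S \<notin> H)"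
  using assms
proof (induction rule: construction.induct)
  case empty
  then show ?case by auto
next
  case (conn H x K)
  define V where "V = \<Union>H"
  have Vne: "V \<noteq> {}" using conn.hyps(2) V_def by (metis card.empty not_one_le_zero)
  have K1: "\<forall>X\<in>K. X \<noteq> {} \<and> X \<subseteq> V - {x}" using conn.IH unfolding restr_def V_def by blast
  show ?case
  proof (intro conjI allI impI ballI)
    fix X assume "X \<in> K \<union> {\<Union>H}" then show "X \<noteq> {}" "X \<subseteq> \<Union>H"
      using K1 Vne V_def by auto
  next
    fix S assume S: "S \<subseteq> K \<union> {\<Union>H}" "2 \<le> card S" "\<forall>X\<in>S. \<forall>Y\<in>S. X \<subseteq> Y \<longrightarrow> X = Y"
    have "V \<notin> S"
    proof
      assume VS: "V \<in> S"
      have "S \<noteq> {V}" using S(2) by auto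
      then obtain X where X: "X \<in> S" "X \<noteq> V" using VS by blast
      then have "X \<in> K" using S(1) V_def by auto
      then have "X \<subseteq> V" using K1 by blast
      then show False using S(3) X VS by blast
    qed
    then have SK: "S \<subseteq> K" using S(1) V_def by auto
    then have "\<Union>S \<notin> restr H (\<Union>H - {x})" using conn.IH S by blast
    moreover have "\<Union>S \<subseteq> \<Union>H - {x}" using SK K1 V_def by blast
    ultimately show "\<Union>S \<notin> H" unfolding restr_def by blast
  qed
next
  case (disc H P f)
  have hp: "hyp_partition H P" using disc.hyps(3) by (simp add: finest_hyp_partition_def)

  show ?case
  proof (intro conjI allI impI ballI)
    fix X assume "X \<in> (\<Union>B\<in>P. f B)"
    then obtain B where "B \<in> P" "X \<in> f B" by blast
    then show "X \<noteq> {}" "X \<subseteq> \<Union>H" using disc.IH hp_cover[OF hp] by blast+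
  next
    fix S assume S: "S \<subseteq> (\<Union>B\<in>P. f B)" "2 \<le> card S" "\<forall>X\<in>S. \<forall>Y\<in>S. X \<subseteq> Y \<longrightarrow> X = Y"
    show "\<Union>S \<notin> H"
    proof
      assume "\<Union>S \<in> H"
      then obtain B' where B': "B' \<in> P" "\<Union>S \<in> B'" using hp_cover[OF hp] by blast
      have "S \<subseteq> f B'"
      proof
        fix X assume X: "X \<in> S"
        then obtain B where B: "B \<in> P" "X \<in> f B" using S(1) by blast
        have "X \<noteq> {}" "X \<subseteq> \<Union>B" using disc.IH B by blast+
        moreover have "X \<subseteq> \<Union>B'" using B' X by blast
        ultimately have "B = B'" using hp_uniq[OF hp] B B' by blast
        then show "X \<in> f B'" using B by simp
      qed
      then have "\<Union>S \<notin> B'" using disc.IH B' S by blast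
      then show False using B' by blast
    qed
  qed
qed


lemma hg_fin: "hypergraph H \<Longrightarrow> finite (\<Union>H)"
  unfolding hypergraph_def by blast

lemma hp_single: "hypergraph H \<Longrightarrow> H \<noteq> {} \<Longrightarrow> hyp_partition H {H}"
  unfolding hp_iff hypergraph_def by auto

lemma conn_carrier:
  assumes hg: "hypergraph H" and sat: "saturated H" and con: "connected_hg H" and ne: "H \<noteq> {}"
  shows "\<Union>H \<in> H"
proof -
  have fin: "finite H" using hg hypergraph_def by blast
  obtain Y where Y: "Y \<in> H" "\<forall>b\<in>H. Y \<subseteq> b \<longrightarrow> Y = b" using finite_has_maximal[OF fin ne] by blast
  have Yne: "Y \<noteq> {}" using hg Y(1) hypergraph_def by blast
  have sub: "X \<subseteq> Y" if "X \<in> H" "X \<inter> Y \<noteq> {}" for X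
  proof -
    have "X \<union> Y \<in> H" using sat that Y(1) unfolding saturated_def by blast
    then have "Y = X \<union> Y" using Y(2) by blast
    then show ?thesis by blast
  qed
  define H1 where "H1 = {X\<in>H. X \<subseteq> Y}"
  define H2 where "H2 = {X\<in>H. \<not> X \<subseteq> Y}"
  show ?thesis
  proof (cases "H2 = {}")
    case True
    then have "\<Union>H = Y" using Y(1) by (auto simp: H2_def)
    then show ?thesis using Y(1) by simp
  next
    case False
    have d1: "H1 \<inter> H2 = {}" by (auto simp: H1_def H2_def)
    have d2: "\<Union>H1 \<inter> \<Union>H2 = {}"
    proof -
      have "\<Union>H1 \<subseteq> Y" by (auto simp: H1_def)
      moreover have "X \<inter> Y = {}" if "X \<in> H2" for X using sub that by (auto simp: H2_def)
      ultimately show ?thesis by blast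
    qed
    have n1: "\<Union>H1 \<noteq> {}" using Y(1) Yne by (auto simp: H1_def)
    have n2: "\<Union>H2 \<noteq> {}" using False hg unfolding H2_def hypergraph_def by blast
    have h12: "H1 \<noteq> H2" using d1 n1 by auto
    have "hyp_partition H {H1, H2}" unfolding hp_iff
    proof (intro conjI)
      show "\<Union>{H1, H2} = H" by (auto simp: H1_def H2_def)
      show "\<forall>X\<in>{H1, H2}. \<Union>X \<noteq> {}" using n1 n2 by simp
      show "\<forall>X\<in>{H1, H2}. \<forall>Ya\<in>{H1, H2}. X \<noteq> Ya \<longrightarrow> X \<inter> Ya = {} \<and> \<Union>X \<inter> \<Union>Ya = {}"
        using d1 d2 by auto
    qed
    moreover have "hyp_partition H {H}" using hp_single hg ne by blast
    moreover have "{H1, H2} \<noteq> {H}" using d1 h12 by auto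
    ultimately show ?thesis using con unfolding connected_hg_def by blast
  qed
qed

lemma hp_refine:
  assumes hp: "hyp_partition H P" and B: "B \<in> P" and hq: "hyp_partition B Q"
  shows "hyp_partition H ((P - {B}) \<union> Q)"
proof -
  have cross: "X \<inter> Y = {} \<and> \<Union>X \<inter> \<Union>Y = {}" if X: "X \<in> Q" and Y: "Y \<in> P - {B}" for X Y
  proof -
    have "X \<subseteq> B" using hp_cover[OF hq] X by blast
    moreover have YP: "Y \<in> P" "B \<noteq> Y" using Y by auto
    moreover have "B \<inter> Y = {}" "\<Union>B \<inter> \<Union>Y = {}"
      using hp_disj[OF hp B YP(1) YP(2)] hp_cdisj[OF hp B YP(1) YP(2)] by auto
    ultimately show ?thesis by blast
  qed
  show ?thesis unfolding hp_iff
  proof (intro conjI ballI impI)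
    show "\<Union>(P - {B} \<union> Q) = H" using hp_cover[OF hp] hp_cover[OF hq] B by blast
  next
    fix X assume "X \<in> P - {B} \<union> Q" then show "\<Union>X \<noteq> {}" using hp_ne[OF hp] hp_ne[OF hq] by blast
  next
    fix X Y assume XY: "X \<in> P - {B} \<union> Q" "Y \<in> P - {B} \<union> Q" "X \<noteq> Y"
    show "X \<inter> Y = {}" using XY cross[of X Y] cross[of Y X] hp_disj[OF hp, of X Y] hp_disj[OF hq, of X Y] by blast
    show "\<Union>X \<inter> \<Union>Y = {}" using XY cross[of X Y] cross[of Y X] hp_cdisj[OF hp, of X Y] hp_cdisj[OF hq, of X Y] by blast
  qed
qed

lemma hp_fin: "hypergraph H \<Longrightarrow> hyp_partition H P \<Longrightarrow> finite P"
proof -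
  assume "hypergraph H" "hyp_partition H P"
  then have "P \<subseteq> Pow H" "finite H" using hp_cover hypergraph_def by blast+
  then show "finite P" using finite_subset by blast
qed

lemma hp_refine_card:
  assumes hg: "hypergraph H" and hp: "hyp_partition H P" and B: "B \<in> P" and hq: "hyp_partition B Q"
    and c: "2 \<le> card Q"
  shows "card P < card ((P - {B}) \<union> Q)"
proof -
  have fP: "finite P" using hg hp hp_fin by blast
  have hgB: "hypergraph B" using hg hp_cover[OF hp] B unfolding hypergraph_def by (meson Union_upper finite_subset subsetD)
  have fQ: "finite Q" using hgB hq hp_fin by blast
  have dis: "(P - {B}) \<inter> Q = {}"
  proof (rule ccontr)
    assume "(P - {B}) \<inter> Q \<noteq> {}"
    then obtain q where q: "q \<in> P" "q \<noteq> B" "q \<in> Q" by blast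
    have "q \<subseteq> B" using hp_cover[OF hq] q by blast
    moreover have "q \<inter> B = {}" using hp_disj[OF hp q(1) B q(2)] .
    ultimately have "q = {}" by blast
    then show False using hp_ne[OF hq q(3)] by simp
  qed
  have "card ((P - {B}) \<union> Q) = card (P - {B}) + card Q" using card_Un_disjoint[OF _ fQ dis] fP by simp
  moreover have "card (P - {B}) = card P - 1" using B fP by simp
  moreover have "card P \<ge> 1" using B fP by (metis card_0_eq empty_iff less_one not_le)
  ultimately show ?thesis using c by linarith
qed

lemma hp_empty_iff: "hyp_partition {} P \<longleftrightarrow> P = {}"
proof
  assume h: "hyp_partition {} P"
  show "P = {}"
  proof (rule ccontr)
    assume "P \<noteq> {}"
    then obtain X where X: "X \<in> P" by blast
    then have "X \<subseteq> {}" using hp_cover[OF h] by blast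
    then show False using hp_ne[OF h X] by simp
  qed
qed (simp add: hp_iff)

lemma finest_exists:
  assumes hg: "hypergraph H" and nc: "\<not> connected_hg H"
  shows "\<exists>P. finest_hyp_partition H P \<and> 2 \<le> card P"
proof -
  have ne: "H \<noteq> {}"
  proof
    assume "H = {}"
    then have "connected_hg H" unfolding connected_hg_def using hp_empty_iff by blast
    then show False using nc by simp
  qed
  define PS where "PS = {P. hyp_partition H P}"
  have fH: "finite H" using hg hypergraph_def by blast
  have "PS \<subseteq> Pow (Pow H)" unfolding PS_def using hp_cover by blast
  then have fPS: "finite PS" using fH finite_subset by blast
  have HPS: "{H} \<in> PS" unfolding PS_def using hp_single hg ne by blast
  define m where "m = Max (card ` PS)"
  have "m \<in> card ` PS" unfolding m_def using fPS HPS by (intro Max_in) auto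
  then obtain P where P: "P \<in> PS" "card P = m" by blast
  have mx: "card Q \<le> card P" if "Q \<in> PS" for Q using P fPS that unfolding m_def by simp
  have hp: "hyp_partition H P" using P PS_def by blast
  have fP: "finite P" using hp_fin hg hp by blast
  have conn: "connected_hg B" if B: "B \<in> P" for B
  proof (rule ccontr)
    assume nB: "\<not> connected_hg B"
    have hgB: "hypergraph B" using hg hp_cover[OF hp] B unfolding hypergraph_def by (meson Union_upper finite_subset subsetD)
    have neB: "B \<noteq> {}" using hp_ne[OF hp B] by auto
    have "hyp_partition B {B}" using hp_single hgB neB by blast
    then obtain Q where Q: "hyp_partition B Q" "Q \<noteq> {B}" using nB unfolding connected_hg_def by blast
    have fQ: "finite Q" using hp_fin hgB Q(1) by blast
    have "Q \<noteq> {}" using hp_cover[OF Q(1)] neB by auto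
    then have "card Q \<noteq> 0" using fQ by simp
    moreover have "card Q \<noteq> 1"
    proof
      assume "card Q = 1"
      then obtain q where "Q = {q}" by (meson card_1_singletonE)
      then show False using hp_cover[OF Q(1)] Q(2) by simp
    qed
    ultimately have "2 \<le> card Q" by linarith
    then have "card P < card ((P - {B}) \<union> Q)" using hp_refine_card hg hp B Q(1) by blast
    moreover have "(P - {B}) \<union> Q \<in> PS" unfolding PS_def using hp_refine[OF hp B Q(1)] by blast
    ultimately show False using mx by fastforce
  qed
  have "card P \<noteq> 0"
  proof
    assume "card P = 0"
    then have "P = {}" using fP by simp
    then show False using hp_cover[OF hp] ne by simp
  qed
  moreover have "card P \<noteq> 1"
  proof
    assume "card P = 1"
    then obtain B where "P = {B}" by (meson card_1_singletonE)
    then have "B = H" "B \<in> P" using hp_cover[OF hp] by auto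
    then show False using conn nc by blast
  qed
  ultimately have "2 \<le> card P" by linarith
  then show ?thesis using hp conn unfolding finest_hyp_partition_def by blast
qed

lemma block_props:
  assumes hg: "hypergraph H" and at: "atomic H" and sat: "saturated H" and hp: "hyp_partition H P"
    and B: "B \<in> P"
  shows "hypergraph B \<and> atomic B \<and> saturated B"
proof (intro conjI)
  have BH: "B \<subseteq> H" using hp_cover[OF hp] B by blast
  show "hypergraph B" using hg BH unfolding hypergraph_def by (meson finite_subset subsetD)
  show "atomic B" unfolding atomic_def
  proof
    fix x assume x: "x \<in> \<Union>B"
    then have "{x} \<in> H" using at BH unfolding atomic_def by blast
    then obtain C where C: "C \<in> P" "{x} \<in> C" using hp_cover[OF hp] by blast
    have "B = C" using hp_uniq[OF hp B C(1), of "{x}"] x C(2) by blast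
    then show "{x} \<in> B" using C by simp
  qed
  show "saturated B" unfolding saturated_def
  proof (intro ballI impI)
    fix X1 X2 assume X: "X1 \<in> B" "X2 \<in> B" "X1 \<inter> X2 \<noteq> {}"
    then have "X1 \<union> X2 \<in> H" using sat BH unfolding saturated_def by blast
    then obtain C where C: "C \<in> P" "X1 \<union> X2 \<in> C" using hp_cover[OF hp] by blast
    have "X1 \<noteq> {}" using X(3) by blast
    moreover have "X1 \<subseteq> \<Union>B" "X1 \<subseteq> \<Union>C" using X C by blast+
    ultimately have "B = C" using hp_uniq[OF hp B C(1)] by blast
    then show "X1 \<union> X2 \<in> B" using C by simp
  qed
qed

lemma block_smaller:
  assumes hg: "hypergraph H" and hp: "hyp_partition H P" and B: "B \<in> P" and c: "2 \<le> card P"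
  shows "card (\<Union>B) < card (\<Union>H)"
proof -
  have "\<not> P \<subseteq> {B}" using c by (metis card.empty card_insert_disjoint empty_iff finite.intros(1) le_antisym
       nat_le_linear not_less_eq_eq numeral_2_eq_2 subset_singletonD)
  then obtain C where C: "C \<in> P" "C \<noteq> B" by blast
  have "\<Union>C \<noteq> {}" "\<Union>C \<inter> \<Union>B = {}" using hp_ne[OF hp C(1)] hp_cdisj[OF hp C(1) B C(2)] by auto
  moreover have "\<Union>C \<subseteq> \<Union>H" "\<Union>B \<subseteq> \<Union>H" using hp_cover[OF hp] B C by blast+
  ultimately have "\<Union>B \<subset> \<Union>H" by blast
  then show ?thesis using hg_fin[OF hg] psubset_card_mono by blast
qed

lemma restr_props:
  assumes hg: "hypergraph H" and at: "atomic H" and sat: "saturated H"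
  shows "hypergraph (restr H Y) \<and> atomic (restr H Y) \<and> saturated (restr H Y) \<and> \<Union>(restr H Y) \<subseteq> Y"
proof (intro conjI)
  show "hypergraph (restr H Y)" using hg unfolding hypergraph_def restr_def by auto
  show "atomic (restr H Y)" using at unfolding atomic_def restr_def by auto
  show "saturated (restr H Y)" using sat unfolding saturated_def restr_def by auto
  show "\<Union>(restr H Y) \<subseteq> Y" unfolding restr_def by auto
qed


lemma main_constr:
  "hypergraph H \<Longrightarrow> atomic H \<Longrightarrow> saturated H \<Longrightarrow> M \<subseteq> H \<Longrightarrow>
   (\<forall>S. antichain M S \<longrightarrow> \<Union>S \<notin> H) \<Longrightarrow> \<exists>K. construction H K \<and> M \<subseteq> K"
proof (induction "card (\<Union>H)" arbitrary: H M rule: less_induct)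
  case less
  note hg = less.prems(1) and at = less.prems(2) and sat = less.prems(3) and MH = less.prems(4)
    and anti = less.prems(5)
  show ?case
  proof (cases "connected_hg H")
    case False
    obtain P where P: "finest_hyp_partition H P" "2 \<le> card P" using finest_exists hg False by blast
    have hp: "hyp_partition H P" using P(1) finest_hyp_partition_def by blast
    have ex: "\<exists>K. construction B K \<and> M \<inter> B \<subseteq> K" if B: "B \<in> P" for B
    proof -
      have pr: "hypergraph B \<and> atomic B \<and> saturated B" using block_props[OF hg at sat hp B] .
      have sm: "card (\<Union>B) < card (\<Union>H)" using block_smaller[OF hg hp B P(2)] .
      have BH: "B \<subseteq> H" using hp_cover[OF hp] B by blast
      have "\<forall>S. antichain (M \<inter> B) S \<longrightarrow> \<Union>S \<notin> B"
      proof (intro allI impI)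
        fix S assume "antichain (M \<inter> B) S"
        then have "antichain M S" unfolding antichain_def by blast
        then show "\<Union>S \<notin> B" using anti BH by blast
      qed
      then show ?thesis using less.hyps[OF sm] pr by blast
    qed
    then obtain f where f: "\<forall>B\<in>P. construction B (f B) \<and> M \<inter> B \<subseteq> f B" by metis
    have "construction H (\<Union>B\<in>P. f B)"
      by (rule construction.disc) (use at False P f in auto)
    moreover have "M \<subseteq> (\<Union>B\<in>P. f B)"
    proof
      fix X assume X: "X \<in> M"
      then obtain B where "B \<in> P" "X \<in> B" using MH hp_cover[OF hp] by blast
      then show "X \<in> (\<Union>B\<in>P. f B)" using f X by blast
    qed
    ultimately show ?thesis by blast
  next
    case True
    show ?thesis
    proof (cases "H = {}")
      case True
      then show ?thesis using MH construction.empty by blast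
    next
      case False
      define V where "V = \<Union>H"
      have VH: "V \<in> H" using conn_carrier hg sat \<open>connected_hg H\<close> False V_def by blast
      have finV: "finite V" using hg_fin hg V_def by blast
      have Vne: "V \<noteq> {}" using VH hg hypergraph_def by blast
      define M' where "M' = M - {V}"
      have fM': "finite M'" using MH hg unfolding M'_def hypergraph_def by (meson finite_Diff finite_subset)
      have M'V: "X \<subseteq> V" if "X \<in> M'" for X using that MH V_def M'_def by blast
      have "\<exists>x\<in>V. \<forall>X\<in>M'. x \<notin> X"
      proof (rule ccontr)
        assume "\<not> (\<exists>x\<in>V. \<forall>X\<in>M'. x \<notin> X)"
        then have cov: "V \<subseteq> \<Union>M'" by blast
        define S where "S = {X\<in>M'. \<forall>Y\<in>M'. X \<subseteq> Y \<longrightarrow> X = Y}"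
        have SM': "S \<subseteq> M'" unfolding S_def by blast
        have US: "\<Union>S = V"
        proof
          show "\<Union>S \<subseteq> V" using SM' M'V by blast
          show "V \<subseteq> \<Union>S"
          proof
            fix v assume "v \<in> V"
            then obtain X where X: "X \<in> M'" "v \<in> X" using cov by blast
            obtain m where "m \<in> M'" "X \<subseteq> m" "\<forall>b\<in>M'. m \<subseteq> b \<longrightarrow> m = b"
              using finite_has_maximal2[OF fM' X(1)] by blast
            then show "v \<in> \<Union>S" using X unfolding S_def by blast
          qed
        qed
        have VS: "V \<notin> S" using SM' M'_def by blast
        have fS: "finite S" using fM' SM' finite_subset by blast
        consider "card S = 0" | "card S = 1" | "2 \<le> card S" by linarith
        then show False
        proof cases
          case 1
          then have "S = {}" using fS by simp
          then show False using US Vne by simp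
        next
          case 2
          then obtain A where "S = {A}" by (meson card_1_singletonE)
          then show False using US VS by simp
        next
          case 3
          then have "antichain M S" unfolding antichain_def S_def M'_def by blast
          then show False using anti US VH by blast
        qed
      qed
      then obtain x where x: "x \<in> V" "\<forall>X\<in>M'. x \<notin> X" by blast
      define H' where "H' = restr H (V - {x})"
      have pr: "hypergraph H' \<and> atomic H' \<and> saturated H' \<and> \<Union>H' \<subseteq> V - {x}"
        using restr_props[OF hg at sat] H'_def by blast
      have "\<Union>H' \<subset> V" using pr x by blast
      then have sm: "card (\<Union>H') < card (\<Union>H)" using finV V_def psubset_card_mono by blast
      have M'H': "M' \<subseteq> H'" using x M'V MH unfolding H'_def restr_def M'_def by blast
      have H'H: "H' \<subseteq> H" unfolding H'_def restr_def by blast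
      have "\<forall>S. antichain M' S \<longrightarrow> \<Union>S \<notin> H'"
      proof (intro allI impI)
        fix S assume "antichain M' S"
        then have "antichain M S" unfolding antichain_def M'_def by blast
        then show "\<Union>S \<notin> H'" using anti H'H by blast
      qed
      then obtain K' where K': "construction H' K'" "M' \<subseteq> K'" using less.hyps[OF sm] pr M'H' by blast
      have c1: "card (\<Union>H) \<ge> 1" using finV Vne V_def by (simp add: Suc_leI card_gt_0_iff)
      have "construction H (K' \<union> {\<Union>H})"
        by (rule construction.conn[where x=x]) (use at c1 True x V_def K' H'_def in auto)
      moreover have "M \<subseteq> K' \<union> {\<Union>H}" using K'(2) M'_def V_def by blast
      ultimately show ?thesis by blast
    qed
  qed
qed

theorem proposition6p12:
  fixes H M :: "'a set set"
  assumes "ASC H" and "M \<subseteq> H"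
  shows "(\<forall>S. antichain M S \<longrightarrow> misses S H) \<longleftrightarrow> (\<exists>K. construction H K \<and> M \<subseteq> K)"
proof
  assume "\<forall>S. antichain M S \<longrightarrow> misses S H"
  then show "\<exists>K. construction H K \<and> M \<subseteq> K"
    using main_constr assms unfolding ASC_def misses_def by blast
next
  assume "\<exists>K. construction H K \<and> M \<subseteq> K"
  then obtain K where K: "construction H K" "M \<subseteq> K" by blast
  show "\<forall>S. antichain M S \<longrightarrow> misses S H"
  proof (intro allI impI)
    fix S assume "antichain M S"
    then have "S \<subseteq> K" "2 \<le> card S" "\<forall>X\<in>S. \<forall>Y\<in>S. X \<subseteq> Y \<longrightarrow> X = Y"
      using K(2) unfolding antichain_def by auto
    then show "misses S H" using constr_props[OF K(1)] unfolding misses_def by blast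
  qed
qed

end
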